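(* Let $r\ge2$ be an integer, let $f\in C_p(\mathbb{R})$ and let $c>0$. Then $f\in\mathcal{P}_c$ if and only if the following holds: for all $n\in\mathbb{N}_0$, $k\in\mathbb{Z}$, $y\in(0,1)$ and all $t\ge \frac{1}{2cr^n}$, $$q_f\Big(t,x;\tfrac{k+y}{r^n}\Big)\ge \min\Big\{q_f\Big(t,x;\tfrac{k}{r^n}\Big),\,q_f\Big(t,x;\tfrac{k+1}{r^n}\Big)\Big\}\quad\text{for all }x\in\mathbb{R}.$$
   Context: $C_p(\mathbb{R})$ denotes the set of all continuous functions $f:\mathbb{R}\to\mathbb{R}$ periodic with period $1$ with $f(0)=0$; $\mathbb{N}_0=\mathbb{N}\cup\{0\}$. For $f\in C_p(\mathbb{R})$, $q_f(t,x;z)=f(z)+\frac{1}{2t}(x-z)^2$ for $(t,x,z)\in(0,\infty)\times\mathbb{R}\times\mathbb{R}$. For $(n,k,y)\in\mathbb{N}_0\times\mathbb{Z}\times(0,1)$ let $\delta^+_{n,k}(y;f)=\dfrac{f(\frac{k+1}{r^n})-f(\frac{k+y}{r^n})}{\frac{1-y}{r^n}}$, $\delta^-_{n,k}(y;f)=\dfrac{f(\frac{k+y}{r^n})-f(\frac{k}{r^n})}{\frac{y}{r^n}}$. For $c>0$, $\mathcal{P}_c$ is the set of $f\in C_p(\mathbb{R})$ with $\delta^+_{n,k}(y;f)-\delta^-_{n,k}(y;f)\le -c$ for all $(n,k,y)\in\mathbb{N}_0\times\mathbb{Z}\times(0,1)$. *)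

theory Defs
  imports "HOL-Analysis.Analysis"
begin

definition Cp :: "(real \<Rightarrow> real) set" where
  "Cp = {f. continuous_on UNIV f \<and> (\<forall>x. f (x + 1) = f x) \<and> f 0 = 0}"

definition qf :: "(real \<Rightarrow> real) \<Rightarrow> real \<Rightarrow> real \<Rightarrow> real \<Rightarrow> real" where
  "qf f t x z = f z + (x - z)^2 / (2 * t)"

definition delta_plus :: "nat \<Rightarrow> nat \<Rightarrow> int \<Rightarrow> real \<Rightarrow> (real \<Rightarrow> real) \<Rightarrow> real" where
  "delta_plus r n k y f =
     (f ((k + 1) / real r ^ n) - f ((k + y) / real r ^ n)) / ((1 - y) / real r ^ n)"

definition delta_minus :: "nat \<Rightarrow> nat \<Rightarrow> int \<Rightarrow> real \<Rightarrow> (real \<Rightarrow> real) \<Rightarrow> real" where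
  "delta_minus r n k y f =
     (f ((k + y) / real r ^ n) - f (k / real r ^ n)) / (y / real r ^ n)"

definition Pc :: "nat \<Rightarrow> real \<Rightarrow> (real \<Rightarrow> real) set" where
  "Pc r c = {f \<in> Cp. \<forall>n k y. 0 < y \<and> y < 1 \<longrightarrow>
                 delta_plus r n k y f - delta_minus r n k y f \<le> - c}"

end

theory Submission
  imports Defs
begin

lemma key1:
  fixes A B Z a h y t x :: real
  assumes "t > 0"
  shows "Z + (x-(a+y*h))^2/(2*t) - ((1-y)*(A + (x-a)^2/(2*t)) + y*(B + (x-(a+h))^2/(2*t)))
     = (Z - (1-y)*A - y*B) - y*(1-y)*h^2/(2*t)"
  using assms by (simp add: field_simps power2_eq_square)

lemma key2:
  fixes A B Z h y c :: real
  assumes "h > 0" "0 < y" "y < 1"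
  shows "(B - Z)/((1-y)*h) - (Z-A)/(y*h) \<le> -c \<longleftrightarrow> c*y*(1-y)*h \<le> Z - (1-y)*A - y*B"
proof -
  have p: "y*(1-y)*h > 0" using assms by simp
  have "(B - Z)/((1-y)*h) - (Z-A)/(y*h) = (y*(B-Z) - (1-y)*(Z-A)) / (y*(1-y)*h)"
    using assms by (simp add: field_simps)
  then show ?thesis using p
    by (simp add: divide_le_eq algebra_simps)
qed

lemma qb_eq:
  fixes A B a h t :: real
  assumes "t > 0" "h > 0"
  shows "B + ((a + h)/2 + t*(B-A)/h + a/2 - (a+h))^2/(2*t) = A + ((a + h)/2 + t*(B-A)/h + a/2 - a)^2/(2*t)"
  using assms by (simp add: field_simps power2_eq_square)

theorem theorem2p3:
  fixes r :: nat and f :: "real \<Rightarrow> real" and c :: real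
  assumes "r \<ge> 2" and "f \<in> Cp" and "c > 0"
  shows "f \<in> Pc r c \<longleftrightarrow>
    (\<forall>(n::nat) (k::int) (y::real) (t::real) (x::real).
       0 < y \<and> y < 1 \<and> t \<ge> 1 / (2 * c * real r ^ n) \<longrightarrow>
       qf f t x ((k + y) / real r ^ n) \<ge>
         min (qf f t x (k / real r ^ n)) (qf f t x ((k + 1) / real r ^ n)))"
proof
  assume P: "f \<in> Pc r c"
  show "\<forall>(n::nat) (k::int) (y::real) (t::real) (x::real).
       0 < y \<and> y < 1 \<and> t \<ge> 1 / (2 * c * real r ^ n) \<longrightarrow>
       qf f t x ((k + y) / real r ^ n) \<ge>
         min (qf f t x (k / real r ^ n)) (qf f t x ((k + 1) / real r ^ n))"
  proof (intro allI impI)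
    fix n :: nat and k :: int and y t x :: real
    assume H: "0 < y \<and> y < 1 \<and> t \<ge> 1 / (2 * c * real r ^ n)"
    define h where "h = 1 / real r ^ n"
    define a where "a = k / real r ^ n"
    have hpos: "h > 0" using assms(1) by (simp add: h_def)
    have e1: "(real_of_int k + 1) / real r ^ n = a + h" by (simp add: a_def h_def add_divide_distrib)
    have e1': "real_of_int (k + 1) / real r ^ n = a + h" by (simp add: a_def h_def add_divide_distrib)
    have e2: "(k + y) / real r ^ n = a + y*h" by (simp add: a_def h_def add_divide_distrib)
    have th: "t \<ge> h/(2*c)" using H by (simp add: h_def mult.commute)
    have tpos: "t > 0" using th hpos assms(3) by (smt (verit) divide_pos_pos)
    have hc: "h/(2*t) \<le> c" using th tpos assms(3) by (simp add: field_simps)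
    have d: "delta_plus r n k y f - delta_minus r n k y f \<le> - c" using P H by (simp add: Pc_def)
    have d': "(f (a+h) - f (a+y*h))/((1-y)*h) - (f (a+y*h) - f a)/(y*h) \<le> -c"
      using d unfolding delta_plus_def delta_minus_def e1'[symmetric] e1[symmetric] e2[symmetric]
      by (simp add: a_def h_def)
    have D: "c*y*(1-y)*h \<le> f (a+y*h) - (1-y)*f a - y*f (a+h)"
      using key2[of h y "f (a+h)" "f (a+y*h)" "f a" c] d' hpos H by simp
    have yy: "y*(1-y)*h \<ge> 0" using H hpos by simp
    have "y*(1-y)*h^2/(2*t) = (y*(1-y)*h) * (h/(2*t))" by (simp add: power2_eq_square)
    also have "\<dots> \<le> (y*(1-y)*h) * c" by (rule mult_left_mono[OF hc yy])
    finally have "y*(1-y)*h^2/(2*t) \<le> c*y*(1-y)*h" by (simp add: mult_ac)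
    then have "qf f t x (a + y*h) - ((1-y)*qf f t x a + y * qf f t x (a+h)) \<ge> 0"
      using key1[OF tpos, of "f (a+y*h)" x a y h "f a" "f (a+h)"] D by (simp add: qf_def)
    moreover have "(1-y)*qf f t x a + y * qf f t x (a+h) \<ge> min (qf f t x a) (qf f t x (a+h))"
    proof -
      let ?m = "min (qf f t x a) (qf f t x (a+h))"
      have "(1-y)*qf f t x a \<ge> (1-y)*?m" using H by (intro mult_left_mono) auto
      moreover have "y*qf f t x (a+h) \<ge> y*?m" using H by (intro mult_left_mono) auto
      ultimately show ?thesis by (simp add: algebra_simps)
    qed
    ultimately show "qf f t x ((k + y) / real r ^ n) \<ge>
         min (qf f t x (k / real r ^ n)) (qf f t x ((real_of_int k + 1) / real r ^ n))"
      unfolding e1 e2 a_def[symmetric] by linarith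
  qed
next
  assume Q: "\<forall>(n::nat) (k::int) (y::real) (t::real) (x::real).
       0 < y \<and> y < 1 \<and> t \<ge> 1 / (2 * c * real r ^ n) \<longrightarrow>
       qf f t x ((k + y) / real r ^ n) \<ge>
         min (qf f t x (k / real r ^ n)) (qf f t x ((k + 1) / real r ^ n))"
  have "\<forall>n k y. 0 < y \<and> y < 1 \<longrightarrow> delta_plus r n k y f - delta_minus r n k y f \<le> - c"
  proof (intro allI impI)
    fix n :: nat and k :: int and y :: real
    assume H: "0 < y \<and> y < 1"
    define h where "h = 1 / real r ^ n"
    define a where "a = k / real r ^ n"
    define t where "t = 1 / (2 * c * real r ^ n)"
    define x where "x = (a + h)/2 + t*(f (a+h) - f a)/h + a/2"
    have hpos: "h > 0" using assms(1) by (simp add: h_def)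
    have e1: "(real_of_int k + 1) / real r ^ n = a + h" by (simp add: a_def h_def add_divide_distrib)
    have e1': "real_of_int (k + 1) / real r ^ n = a + h" by (simp add: a_def h_def add_divide_distrib)
    have e2: "(k + y) / real r ^ n = a + y*h" by (simp add: a_def h_def add_divide_distrib)
    have tpos: "t > 0" using assms(1,3) by (simp add: t_def)
    have th: "h/(2*t) = c" using assms(1,3) by (simp add: t_def h_def field_simps)
    have q: "qf f t x (a + y*h) \<ge> min (qf f t x a) (qf f t x (a+h))"
      using Q[rule_format, of y n t x k] H unfolding e1' e1 e2 by (simp add: t_def a_def)
    have eq: "qf f t x (a+h) = qf f t x a"
      unfolding qf_def x_def using qb_eq[OF tpos hpos, where A="f a" and B="f (a+h)" and a=a] by simp
    have "qf f t x (a + y*h) - ((1-y)*qf f t x a + y * qf f t x (a+h)) \<ge> 0"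
      using q eq by (simp add: algebra_simps)
    then have "0 \<le> (f (a+y*h) - (1-y)*f a - y*f (a+h)) - y*(1-y)*h^2/(2*t)"
      using key1[OF tpos, of "f (a+y*h)" x a y h "f a" "f (a+h)"] by (simp add: qf_def)
    moreover have "y*(1-y)*h^2/(2*t) = c*y*(1-y)*h"
      using th by (simp add: power2_eq_square) (metis mult.commute mult.left_commute times_divide_eq_right)
    ultimately have D: "c*y*(1-y)*h \<le> f (a+y*h) - (1-y)*f a - y*f (a+h)" by simp
    have "(f (a+h) - f (a+y*h))/((1-y)*h) - (f (a+y*h) - f a)/(y*h) \<le> -c"
      using key2[of h y "f (a+h)" "f (a+y*h)" "f a" c] D hpos H by simp
    then show "delta_plus r n k y f - delta_minus r n k y f \<le> - c"
      unfolding delta_plus_def delta_minus_def e1' e1 e2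
      by (simp add: a_def h_def)
  qed
  then show "f \<in> Pc r c" using assms(2) by (simp add: Pc_def)
qed

end
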